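(* Let $R$ be a unique factorization domain. Let $1\leqslant n\leqslant m$, let $s_1,\dots,s_n\in\operatorname{Sqf} R$ with $s_i\mid s_{i+1}$ for $i=1,\dots,n-1$, and let $t_1,\dots,t_m\in\operatorname{Sqf} R$ with $t_i\mid t_{i+1}$ for $i=1,\dots,m-1$. If $s_1s_2\cdots s_n=t_1t_2\cdots t_m$, then $s_i\sim t_{i+m-n}$ for $i=1,\dots,n$, and, if $m>n$, then $t_i\in R^{\ast}$ for $i=1,\dots,m-n$.
   Context: $R^{\ast}$ denotes the set of invertible elements of $R$; $a\sim b$ means $a$ and $b$ are associated; $a\mid b$ means $a$ divides $b$. An element $a\in R$ is square-free if it cannot be written as $a=b^2c$ with $b\in R\setminus R^{\ast}$ and $c\in R$; $\operatorname{Sqf} R$ denotes the set of square-free elements of $R$. *)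

theory Defs
  imports "HOL-Computational_Algebra.Factorial_Ring"
begin

definition sqf :: "'a::algebraic_semidom \<Rightarrow> bool" where
  "sqf a \<longleftrightarrow> \<not> (\<exists>b c. \<not> is_unit b \<and> a = b^2 * c)"

definition assoc :: "'a::algebraic_semidom \<Rightarrow> 'a \<Rightarrow> bool" where
  "assoc a b \<longleftrightarrow> a dvd b \<and> b dvd a"

end

theory Submission
  imports Defs
begin

lemma mono_steps:
  fixes f :: "nat \<Rightarrow> nat"
  assumes "\<forall>i\<in>{1..<n}. f i \<le> f (i + 1)" "1 \<le> i" "i \<le> j" "j \<le> n"
  shows "f i \<le> f j"
  using assms(3,4)
proof (induction j rule: dec_induct)
  case base then show ?case by simp
next
  case (step k)
  then have "f k \<le> f (k+1)" using assms(1,2) by auto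
  with step show ?case by simp
qed

lemma count01:
  fixes f :: "nat \<Rightarrow> nat"
  assumes le1: "\<forall>i\<in>{1..n}. f i \<le> 1" and mono: "\<forall>i\<in>{1..<n}. f i \<le> f (i + 1)"
    and i: "i \<in> {1..n}"
  shows "f i = 1 \<longleftrightarrow> n < i + (\<Sum>j=1..n. f j)"
proof (cases "f i = 1")
  case True
  have "\<forall>j\<in>{i..n}. f j = 1"
  proof
    fix j assume "j \<in> {i..n}"
    then have "f i \<le> f j" "f j \<le> 1" using mono_steps[OF mono, of i j] i le1 by auto
    with True show "f j = 1" by simp
  qed
  then have "(\<Sum>j=i..n. f j) = card {i..n}" by simp
  moreover have "(\<Sum>j=i..n. f j) \<le> (\<Sum>j=1..n. f j)"
    using i by (intro sum_mono2) auto
  ultimately show ?thesis using True i by auto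
next
  case False
  then have fi0: "f i = 0" using le1 i by force
  have z: "\<forall>j\<in>{1..i}. f j = 0"
  proof
    fix j assume "j \<in> {1..i}"
    then have "f j \<le> f i" using mono_steps[OF mono, of j i] i by auto
    with fi0 show "f j = 0" by simp
  qed
  have split: "{1..n} = {1..i} \<union> {i<..n}" using i by auto
  have "(\<Sum>j=1..n. f j) = (\<Sum>j=1..i. f j) + (\<Sum>j\<in>{i<..n}. f j)"
    unfolding split by (rule sum.union_disjoint) auto
  also have "\<dots> = (\<Sum>j\<in>{i<..n}. f j)" using z by simp
  also have "\<dots> \<le> (\<Sum>j\<in>{i<..n}. 1)" using le1 by (intro sum_mono) auto
  also have "\<dots> = n - i" by simp
  finally show ?thesis using False i by auto
qed

lemma sum_le_card:
  fixes f :: "nat \<Rightarrow> nat"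
  assumes "\<forall>i\<in>{1..n}. f i \<le> 1"
  shows "(\<Sum>j=1..n. f j) \<le> n"
proof -
  have "(\<Sum>j=1..n. f j) \<le> (\<Sum>j=1..n. 1)" using assms by (intro sum_mono) auto
  then show ?thesis by simp
qed

lemma sqf_nonzero:
  fixes a :: "'a::{factorial_semiring,idom}"
  assumes "sqf a" shows "a \<noteq> 0"
proof
  assume "a = 0"
  then have "a = (0::'a)^2 * 0" by simp
  moreover have "\<not> is_unit (0::'a)" by simp
  ultimately show False using assms unfolding sqf_def by blast
qed

lemma sqf_mult_le1:
  fixes a p :: "'a::{factorial_semiring,idom}"
  assumes "sqf a" "prime p" shows "multiplicity p a \<le> 1"
proof (rule ccontr)
  assume "\<not> ?thesis"
  then have "p^2 dvd a" by (intro multiplicity_dvd') simp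
  then obtain c where "a = p^2 * c" by (auto elim: dvdE)
  moreover have "\<not> is_unit p" using assms(2) by (simp add: prime_def prime_elem_def)
  ultimately show False using assms(1) unfolding sqf_def by blast
qed

lemma mult_unit:
  fixes x :: "'a::{factorial_semiring,idom}"
  assumes "x \<noteq> 0" "\<And>p. prime p \<Longrightarrow> multiplicity p x = 0"
  shows "is_unit x"
proof (rule ccontr)
  assume "\<not> is_unit x"
  then obtain p where "p dvd x" "prime p" using prime_divisor_exists[OF assms(1)] by auto
  then have "multiplicity p x > 0"
    using prime_multiplicity_gt_zero_iff[of p x] assms(1) by auto
  with assms(2)[OF \<open>prime p\<close>] show False by simp
qed

theorem proposition2:
  fixes s t :: "nat \<Rightarrow> 'a::{factorial_semiring,idom}" and n m :: nat
  assumes "1 \<le> n" and "n \<le> m"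
    and "\<forall>i\<in>{1..n}. sqf (s i)"
    and "\<forall>i\<in>{1..<n}. s i dvd s (i + 1)"
    and "\<forall>i\<in>{1..m}. sqf (t i)"
    and "\<forall>i\<in>{1..<m}. t i dvd t (i + 1)"
    and "(\<Prod>i=1..n. s i) = (\<Prod>i=1..m. t i)"
  shows "(\<forall>i\<in>{1..n}. assoc (s i) (t (i + m - n)))
       \<and> (m > n \<longrightarrow> (\<forall>i\<in>{1..m - n}. is_unit (t i)))"
proof -
  have snz: "\<forall>i\<in>{1..n}. s i \<noteq> 0" using assms(3) sqf_nonzero by blast
  have tnz: "\<forall>i\<in>{1..m}. t i \<noteq> 0" using assms(5) sqf_nonzero by blast
  have key: "\<And>p. prime p \<Longrightarrow>
      (\<forall>i\<in>{1..n}. multiplicity p (s i) = multiplicity p (t (i + m - n)))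
      \<and> (\<forall>i\<in>{1..m - n}. multiplicity p (t i) = 0)"
  proof -
    fix p :: 'a assume p: "prime p"
    define fs where "fs = (\<lambda>j. multiplicity p (s j))"
    define ft where "ft = (\<lambda>j. multiplicity p (t j))"
    have fs1: "\<forall>i\<in>{1..n}. fs i \<le> 1" using assms(3) p sqf_mult_le1 unfolding fs_def by blast
    have ft1: "\<forall>i\<in>{1..m}. ft i \<le> 1" using assms(5) p sqf_mult_le1 unfolding ft_def by blast
    have fsm: "\<forall>i\<in>{1..<n}. fs i \<le> fs (i + 1)"
      unfolding fs_def using assms(4) snz by (auto intro!: dvd_imp_multiplicity_le)
    have ftm: "\<forall>i\<in>{1..<m}. ft i \<le> ft (i + 1)"
      unfolding ft_def using assms(6) tnz by (auto intro!: dvd_imp_multiplicity_le)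
    have pe: "prime_elem p" using p by simp
    have "(\<Sum>j=1..n. fs j) = multiplicity p (\<Prod>i=1..n. s i)"
      unfolding fs_def using snz by (subst prime_elem_multiplicity_prod_distrib[OF pe]) auto
    also have "\<dots> = multiplicity p (\<Prod>i=1..m. t i)" using assms(7) by simp
    also have "\<dots> = (\<Sum>j=1..m. ft j)"
      unfolding ft_def using tnz by (subst prime_elem_multiplicity_prod_distrib[OF pe]) auto
    finally have S: "(\<Sum>j=1..n. fs j) = (\<Sum>j=1..m. ft j)" .
    have Sn: "(\<Sum>j=1..n. fs j) \<le> n" using sum_le_card[OF fs1] .
    have A: "\<forall>i\<in>{1..n}. fs i = ft (i + m - n)"
    proof
      fix i assume i: "i \<in> {1..n}"
      have i': "i + m - n \<in> {1..m}" using i assms(2) by auto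
      have e1: "fs i = 1 \<longleftrightarrow> n < i + (\<Sum>j=1..n. fs j)" using count01[OF fs1 fsm i] .
      have e2: "ft (i+m-n) = 1 \<longleftrightarrow> m < (i+m-n) + (\<Sum>j=1..m. ft j)" using count01[OF ft1 ftm i'] .
      have "fs i \<le> 1" "ft (i+m-n) \<le> 1" using fs1 ft1 i i' by auto
      with e1 e2 S i assms(2) show "fs i = ft (i + m - n)" by auto
    qed
    have B: "\<forall>i\<in>{1..m - n}. ft i = 0"
    proof
      fix i assume i: "i \<in> {1..m - n}"
      have i': "i \<in> {1..m}" using i by auto
      have e2: "ft i = 1 \<longleftrightarrow> m < i + (\<Sum>j=1..m. ft j)" using count01[OF ft1 ftm i'] .
      have "ft i \<le> 1" using ft1 i' by auto
      with e2 S Sn i show "ft i = 0" by auto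
    qed
    show "(\<forall>i\<in>{1..n}. multiplicity p (s i) = multiplicity p (t (i + m - n)))
      \<and> (\<forall>i\<in>{1..m - n}. multiplicity p (t i) = 0)"
      using A B unfolding fs_def ft_def by blast
  qed
  have P1: "\<forall>i\<in>{1..n}. assoc (s i) (t (i + m - n))"
  proof
    fix i assume i: "i \<in> {1..n}"
    have i': "i + m - n \<in> {1..m}" using i assms(2) by auto
    show "assoc (s i) (t (i + m - n))" unfolding assoc_def
    proof
      show "s i dvd t (i + m - n)"
        by (rule multiplicity_le_imp_dvd) (use snz i key in auto)
      show "t (i + m - n) dvd s i"
        by (rule multiplicity_le_imp_dvd) (use tnz i' i key in auto)
    qed
  qed
  have P2: "\<forall>i\<in>{1..m - n}. is_unit (t i)"
  proof
    fix i assume i: "i \<in> {1..m - n}"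
    then have "t i \<noteq> 0" using tnz by auto
    then show "is_unit (t i)" by (rule mult_unit) (use key i in auto)
  qed
  show ?thesis using P1 P2 by blast
qed

end
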